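(* If the ISU decomposition of $R(t)-R(0)$ (with respect to $(\mathcal{T}_n(t))_{n\in\mathbb{N}}$) is independent of the update order, i.e. there is $(D_1(t),\ldots,D_m(t))$ with $D^{\pi}_{\pi(i)}(t)=D_i(t)$ for all $i$ and all $\pi\in\sigma_m$, then the ISU decomposition (for each update order), the ceteris paribus effects of the IOAT decomposition, and the averaged ISU decomposition all coincide and equal $(D_1(t),\ldots,D_m(t))$; moreover the IOAT interaction effect is zero.
   Context: Let $(\Omega,\mathcal{A},\mathbb{P})$ be a complete probability space with a right-continuous complete filtration. Let $X=(X_1,\ldots,X_m)$ be an adapted multivariate process (risk basis), $X^t$ the process stopped at $t$, and let $R(t)=\varrho(X^t)$, $t\ge 0$, for a mapping $\varrho$. Define the revaluation surplus surface $U(t_1,\ldots,t_m)=\varrho((X_1^{t_1},\ldots,X_m^{t_m}))$, so $R(t)=U(t,\ldots,t)$. For a partition $\mathcal{T}(t)=\{0=t_0<\cdots<t_k=t\}$, the SU (sequential updating) decomposition of $R(t)-R(0)$ is $D_i(t)=\sum_{l=0}^{k-1}\big(U(t_{l+1},\ldots,t_{l+1},t_l,\ldots,t_l)-U(t_{l+1},\ldots,t_{l+1},t_l,t_l,\ldots,t_l)\big)$, where in the first term the first $i$ arguments equal $t_{l+1}$ and in the second term the first $i-1$ arguments equal $t_{l+1}$ (rest equal $t_l$); i.e. risk factors are updated in the order $1,\ldots,m$. An update order is a permutation $\pi\in\sigma_m$ (the set of all permutations of $\{1,\ldots,m\}$), meaning the factors are updated in the order given by $\pi$ instead. For a sequence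 of partitions $\mathcal{T}_n(t)$ of $[0,t]$ with vanishing mesh, the ISU (infinitesimal sequential updating) decomposition $D(t)$ is the componentwise limit in probability of the SU decompositions w.r.t. $\mathcal{T}_n(t)$; $D^{\pi}(t)=(D^\pi_1(t),\ldots,D^\pi_m(t))$ denotes the ISU decomposition for update order $\pi$. The OAT (one-at-a-time) decomposition w.r.t. $\mathcal{T}(t)$ is $(D_1(t),\ldots,D_m(t),\overline{D}(t))$ with ceteris paribus effects $D_i(t)=\sum_{l=0}^{k-1}\big(U(t_l,\ldots,t_l,t_{l+1},t_l,\ldots,t_l)-U(t_l,\ldots,t_l)\big)$ ($t_{l+1}$ in the $i$-th argument only) and interaction effect $\overline{D}(t)=R(t)-R(0)-\sum_{i=1}^m D_i(t)$; the IOAT decomposition is the componentwise limit in probability of the OAT decompositions along $\mathcal{T}_n(t)$. The averaged ISU decomposition is $D_i(t)=\frac{1}{m!}\sum_{\pi\in\sigma_m}D^\pi_{\pi(i)}(t)$, $i=1,\ldots,m$. It was previously shown that the ISU decomposition is independent of update order iff for each update order it equals the ceteris paribus effects of the IOAT decomposition, in which case the interaction effect is zero. *)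

theory Defs
  imports "HOL-Probability.Probability"
begin

definition complete_prob_space :: "'a measure \<Rightarrow> bool" where
  "complete_prob_space M \<longleftrightarrow> prob_space M \<and>
     (\<forall>A B. B \<in> null_sets M \<longrightarrow> A \<subseteq> B \<longrightarrow> A \<in> sets M)"

definition rc_complete_filtration :: "'a measure \<Rightarrow> (real \<Rightarrow> 'a measure) \<Rightarrow> bool" where
  "rc_complete_filtration M F \<longleftrightarrow>
     (\<forall>s\<ge>0. space (F s) = space M \<and> sets (F s) \<subseteq> sets M) \<and>
     (\<forall>s r. 0 \<le> s \<longrightarrow> s \<le> r \<longrightarrow> sets (F s) \<subseteq> sets (F r)) \<and>
     (\<forall>s\<ge>0. sets (F s) = (\<Inter>r\<in>{s<..}. sets (F r))) \<and>
     null_sets M \<subseteq> sets (F 0)"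

definition adapted :: "(real \<Rightarrow> 'a measure) \<Rightarrow> nat \<Rightarrow> (nat \<Rightarrow> real \<Rightarrow> 'a \<Rightarrow> real) \<Rightarrow> bool" where
  "adapted F m X \<longleftrightarrow> (\<forall>i\<in>{1..m}. \<forall>s\<ge>0. X i s \<in> borel_measurable (F s))"

definition stopped :: "(real \<Rightarrow> 'a \<Rightarrow> real) \<Rightarrow> real \<Rightarrow> real \<Rightarrow> 'a \<Rightarrow> real" where
  "stopped Y t = (\<lambda>s \<omega>. Y (min s t) \<omega>)"

text \<open>U(s_1,...,s_m) = rho((X_1^{s_1},...,X_m^{s_m})); components outside 1..m are
  filled with the zero process (they carry no information).\<close>
definition surface ::
  "((nat \<Rightarrow> real \<Rightarrow> 'a \<Rightarrow> real) \<Rightarrow> 'a \<Rightarrow> real) \<Rightarrow> nat \<Rightarrow> (nat \<Rightarrow> real \<Rightarrow> 'a \<Rightarrow> real)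
     \<Rightarrow> (nat \<Rightarrow> real) \<Rightarrow> 'a \<Rightarrow> real" where
  "surface \<rho> m X s = \<rho> (\<lambda>j. if j \<in> {1..m} then stopped (X j) (s j) else (\<lambda>_ _. 0))"

definition R_proc ::
  "((nat \<Rightarrow> real \<Rightarrow> 'a \<Rightarrow> real) \<Rightarrow> 'a \<Rightarrow> real) \<Rightarrow> nat \<Rightarrow> (nat \<Rightarrow> real \<Rightarrow> 'a \<Rightarrow> real)
     \<Rightarrow> real \<Rightarrow> 'a \<Rightarrow> real" where
  "R_proc \<rho> m X t = surface \<rho> m X (\<lambda>_. t)"

definition is_partition :: "real \<Rightarrow> nat \<Rightarrow> (nat \<Rightarrow> real) \<Rightarrow> bool" where
  "is_partition t k p \<longleftrightarrow> p 0 = 0 \<and> p k = t \<and> (\<forall>l<k. p l < p (Suc l))"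

definition mesh :: "nat \<Rightarrow> (nat \<Rightarrow> real) \<Rightarrow> real" where
  "mesh k p = (if k = 0 then 0 else Max ((\<lambda>l. p (Suc l) - p l) ` {..<k}))"

text \<open>Update order pi (a permutation of {1..m}): factor i is updated in step pi i.
  upd_vec pi a b k: factors updated in steps 1..k are at time b, the others at time a.\<close>
definition upd_vec :: "(nat \<Rightarrow> nat) \<Rightarrow> real \<Rightarrow> real \<Rightarrow> nat \<Rightarrow> nat \<Rightarrow> real" where
  "upd_vec \<pi> a b k = (\<lambda>j. if \<pi> j \<le> k then b else a)"

text \<open>k-th component D^pi_k of the SU decomposition for update order pi w.r.t. the
  partition (k-point) p; it is the effect of the factor updated in step k.
  For pi = id this is exactly the SU decomposition of the paper.\<close>
definition SU ::
  "((nat \<Rightarrow> real \<Rightarrow> 'a \<Rightarrow> real) \<Rightarrow> 'a \<Rightarrow> real) \<Rightarrow> nat \<Rightarrow> (nat \<Rightarrow> real \<Rightarrow> 'a \<Rightarrow> real)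
     \<Rightarrow> (nat \<Rightarrow> nat) \<Rightarrow> nat \<Rightarrow> (nat \<Rightarrow> real) \<Rightarrow> nat \<Rightarrow> 'a \<Rightarrow> real" where
  "SU \<rho> m X \<pi> K p k = (\<lambda>\<omega>. \<Sum>l<K.
      surface \<rho> m X (upd_vec \<pi> (p l) (p (Suc l)) k) \<omega>
    - surface \<rho> m X (upd_vec \<pi> (p l) (p (Suc l)) (k - 1)) \<omega>)"

definition OAT ::
  "((nat \<Rightarrow> real \<Rightarrow> 'a \<Rightarrow> real) \<Rightarrow> 'a \<Rightarrow> real) \<Rightarrow> nat \<Rightarrow> (nat \<Rightarrow> real \<Rightarrow> 'a \<Rightarrow> real)
     \<Rightarrow> nat \<Rightarrow> (nat \<Rightarrow> real) \<Rightarrow> nat \<Rightarrow> 'a \<Rightarrow> real" where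
  "OAT \<rho> m X K p i = (\<lambda>\<omega>. \<Sum>l<K.
      surface \<rho> m X (\<lambda>j. if j = i then p (Suc l) else p l) \<omega>
    - surface \<rho> m X (\<lambda>j. p l) \<omega>)"

definition OAT_interaction ::
  "((nat \<Rightarrow> real \<Rightarrow> 'a \<Rightarrow> real) \<Rightarrow> 'a \<Rightarrow> real) \<Rightarrow> nat \<Rightarrow> (nat \<Rightarrow> real \<Rightarrow> 'a \<Rightarrow> real)
     \<Rightarrow> real \<Rightarrow> nat \<Rightarrow> (nat \<Rightarrow> real) \<Rightarrow> 'a \<Rightarrow> real" where
  "OAT_interaction \<rho> m X t K p = (\<lambda>\<omega>.
      R_proc \<rho> m X t \<omega> - R_proc \<rho> m X 0 \<omega> - (\<Sum>i\<in>{1..m}. OAT \<rho> m X K p i \<omega>))"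

definition conv_in_prob :: "'a measure \<Rightarrow> (nat \<Rightarrow> 'a \<Rightarrow> real) \<Rightarrow> ('a \<Rightarrow> real) \<Rightarrow> bool" where
  "conv_in_prob M Y Z \<longleftrightarrow> Z \<in> borel_measurable M \<and>
     (\<forall>e>0. (\<lambda>n. measure M {\<omega> \<in> space M. e < \<bar>Y n \<omega> - Z \<omega>\<bar>}) \<longlonglongrightarrow> 0)"

end

theory Submission
  imports Defs
begin

lemma cip_add:
  assumes P: "prob_space M"
    and mY: "\<And>n. Y n \<in> borel_measurable M" and mY': "\<And>n. Y' n \<in> borel_measurable M"
    and c1: "conv_in_prob M Y Z" and c2: "conv_in_prob M Y' Z'"
  shows "conv_in_prob M (\<lambda>n \<omega>. Y n \<omega> + Y' n \<omega>) (\<lambda>\<omega>. Z \<omega> + Z' \<omega>)"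
proof -
  interpret prob_space M by (rule P)
  have mZ: "Z \<in> borel_measurable M" "Z' \<in> borel_measurable M"
    using c1 c2 by (auto simp: conv_in_prob_def)
  show ?thesis unfolding conv_in_prob_def
  proof (intro conjI allI impI)
    show "(\<lambda>\<omega>. Z \<omega> + Z' \<omega>) \<in> borel_measurable M" using mZ by simp
    fix e :: real assume e: "0 < e"
    define A where "A n = {\<omega> \<in> space M. e < \<bar>Y n \<omega> + Y' n \<omega> - (Z \<omega> + Z' \<omega>)\<bar>}" for n
    define B where "B n = {\<omega> \<in> space M. e/2 < \<bar>Y n \<omega> - Z \<omega>\<bar>}" for n
    define C where "C n = {\<omega> \<in> space M. e/2 < \<bar>Y' n \<omega> - Z' \<omega>\<bar>}" for n
    have sA: "A n \<in> sets M" for n unfolding A_def using mY mY' mZ by measurable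
    have sB: "B n \<in> sets M" for n unfolding B_def using mY mZ by measurable
    have sC: "C n \<in> sets M" for n unfolding C_def using mY' mZ by measurable
    have sub: "A n \<subseteq> B n \<union> C n" for n
    proof
      fix \<omega> assume "\<omega> \<in> A n"
      hence w: "\<omega> \<in> space M" "e < \<bar>(Y n \<omega> - Z \<omega>) + (Y' n \<omega> - Z' \<omega>)\<bar>"
        unfolding A_def by (auto simp: algebra_simps)
      have "\<bar>(Y n \<omega> - Z \<omega>) + (Y' n \<omega> - Z' \<omega>)\<bar> \<le> \<bar>Y n \<omega> - Z \<omega>\<bar> + \<bar>Y' n \<omega> - Z' \<omega>\<bar>"
        by (rule abs_triangle_ineq)
      hence "e/2 < \<bar>Y n \<omega> - Z \<omega>\<bar> \<or> e/2 < \<bar>Y' n \<omega> - Z' \<omega>\<bar>" using w(2) by linarith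
      thus "\<omega> \<in> B n \<union> C n" using w(1) unfolding B_def C_def by auto
    qed
    have le: "measure M (A n) \<le> measure M (B n) + measure M (C n)" for n
    proof -
      have "measure M (A n) \<le> measure M (B n \<union> C n)"
        using sub sB sC by (intro finite_measure_mono) auto
      also have "\<dots> \<le> measure M (B n) + measure M (C n)"
        using sB sC by (intro measure_subadditive) auto
      finally show ?thesis .
    qed
    have "(\<lambda>n. measure M (B n)) \<longlonglongrightarrow> 0" using c1 e unfolding conv_in_prob_def B_def by (meson half_gt_zero)
    moreover have "(\<lambda>n. measure M (C n)) \<longlonglongrightarrow> 0" using c2 e unfolding conv_in_prob_def C_def by (meson half_gt_zero)
    ultimately have lim: "(\<lambda>n. measure M (B n) + measure M (C n)) \<longlonglongrightarrow> 0 + 0"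
      by (rule tendsto_add)
    have "(\<lambda>n. measure M (A n)) \<longlonglongrightarrow> 0"
    proof (rule tendsto_sandwich[where f="\<lambda>_. 0" and h="\<lambda>n. measure M (B n) + measure M (C n)"])
      show "\<forall>\<^sub>F n in sequentially. 0 \<le> measure M (A n)" by simp
      show "\<forall>\<^sub>F n in sequentially. measure M (A n) \<le> measure M (B n) + measure M (C n)"
        using le by simp
      show "(\<lambda>n. 0::real) \<longlonglongrightarrow> 0" by (rule tendsto_const)
      show "(\<lambda>n. measure M (B n) + measure M (C n)) \<longlonglongrightarrow> 0" using lim by simp
    qed
    thus "(\<lambda>n. measure M {\<omega> \<in> space M. e < \<bar>Y n \<omega> + Y' n \<omega> - (Z \<omega> + Z' \<omega>)\<bar>}) \<longlonglongrightarrow> 0"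
      unfolding A_def .
  qed
qed

lemma cip_uminus:
  assumes "conv_in_prob M Y Z"
  shows "conv_in_prob M (\<lambda>n \<omega>. - Y n \<omega>) (\<lambda>\<omega>. - Z \<omega>)"
proof -
  have "\<bar>- Y n \<omega> - - Z \<omega>\<bar> = \<bar>Y n \<omega> - Z \<omega>\<bar>" for n \<omega> by linarith
  thus ?thesis using assms unfolding conv_in_prob_def by simp
qed

lemma cip_diff:
  assumes P: "prob_space M"
    and mY: "\<And>n. Y n \<in> borel_measurable M" and mY': "\<And>n. Y' n \<in> borel_measurable M"
    and c1: "conv_in_prob M Y Z" and c2: "conv_in_prob M Y' Z'"
  shows "conv_in_prob M (\<lambda>n \<omega>. Y n \<omega> - Y' n \<omega>) (\<lambda>\<omega>. Z \<omega> - Z' \<omega>)"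
proof -
  have m: "\<And>n. (\<lambda>\<omega>. - Y' n \<omega>) \<in> borel_measurable M" using mY' by (rule borel_measurable_uminus)
  have "conv_in_prob M (\<lambda>n \<omega>. Y n \<omega> + - Y' n \<omega>) (\<lambda>\<omega>. Z \<omega> + - Z' \<omega>)"
    by (rule cip_add[OF P mY m c1 cip_uminus[OF c2]])
  thus ?thesis by (simp only: diff_conv_add_uminus)
qed

lemma cip_sum:
  assumes P: "prob_space M" and fin: "finite S"
    and mY: "\<And>i n. i \<in> S \<Longrightarrow> Y i n \<in> borel_measurable M"
    and c: "\<And>i. i \<in> S \<Longrightarrow> conv_in_prob M (Y i) (Z i)"
  shows "conv_in_prob M (\<lambda>n \<omega>. \<Sum>i\<in>S. Y i n \<omega>) (\<lambda>\<omega>. \<Sum>i\<in>S. Z i \<omega>)"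
  using fin mY c
proof (induction S rule: finite_induct)
  case empty
  then show ?case by (simp add: conv_in_prob_def)
next
  case (insert x F)
  have m1: "\<And>n. Y x n \<in> borel_measurable M" using insert.prems(1) by blast
  have m2: "\<And>n. (\<lambda>\<omega>. \<Sum>i\<in>F. Y i n \<omega>) \<in> borel_measurable M"
    using insert.prems(1) by (intro borel_measurable_sum) blast
  have c1: "conv_in_prob M (Y x) (Z x)" using insert.prems(2) by blast
  have c2: "conv_in_prob M (\<lambda>n \<omega>. \<Sum>i\<in>F. Y i n \<omega>) (\<lambda>\<omega>. \<Sum>i\<in>F. Z i \<omega>)"
    using insert.IH insert.prems by blast
  have "conv_in_prob M (\<lambda>n \<omega>. Y x n \<omega> + (\<Sum>i\<in>F. Y i n \<omega>)) (\<lambda>\<omega>. Z x \<omega> + (\<Sum>i\<in>F. Z i \<omega>))"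
    by (rule cip_add[OF P m1 m2 c1 c2])
  thus ?case by (simp only: sum.insert[OF insert.hyps])
qed

lemma cip_unique:
  assumes P: "prob_space M"
    and mY: "\<And>n. Y n \<in> borel_measurable M"
    and c1: "conv_in_prob M Y Z" and c2: "conv_in_prob M Y Z'"
  shows "AE \<omega> in M. Z \<omega> = Z' \<omega>"
proof -
  interpret prob_space M by (rule P)
  have c: "conv_in_prob M (\<lambda>n \<omega>. Y n \<omega> - Y n \<omega>) (\<lambda>\<omega>. Z \<omega> - Z' \<omega>)"
    by (rule cip_diff[OF P mY mY c1 c2])
  have mW: "(\<lambda>\<omega>. Z \<omega> - Z' \<omega>) \<in> borel_measurable M" using c unfolding conv_in_prob_def by (rule conjunct1)
  define N where "N k = {\<omega> \<in> space M. 1 / real (Suc k) < \<bar>Z \<omega> - Z' \<omega>\<bar>}" for k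
  have N: "N k \<in> null_sets M" for k
  proof -
    have sN: "N k \<in> sets M" unfolding N_def using mW by measurable
    have pos: "0 < 1 / real (Suc k)" by simp
    have "(\<lambda>n. measure M {\<omega> \<in> space M. 1 / real (Suc k) < \<bar>Y n \<omega> - Y n \<omega> - (Z \<omega> - Z' \<omega>)\<bar>}) \<longlonglongrightarrow> 0"
      using c pos unfolding conv_in_prob_def by blast
    moreover have "{\<omega> \<in> space M. 1 / real (Suc k) < \<bar>Y n \<omega> - Y n \<omega> - (Z \<omega> - Z' \<omega>)\<bar>} = N k" for n
    proof -
      have "\<bar>Y n \<omega> - Y n \<omega> - (Z \<omega> - Z' \<omega>)\<bar> = \<bar>Z \<omega> - Z' \<omega>\<bar>" for \<omega>
        by linarith
      thus ?thesis unfolding N_def by (simp only:)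
    qed
    ultimately have "(\<lambda>n. measure M (N k)) \<longlonglongrightarrow> 0" by (simp only:)
    hence "measure M (N k) = 0" by (rule LIMSEQ_const_iff[THEN iffD1])
    thus ?thesis using sN by (simp add: emeasure_eq_measure null_sets_def)
  qed
  have sub: "{\<omega> \<in> space M. \<not> Z \<omega> = Z' \<omega>} \<subseteq> (\<Union>k. N k)"
  proof
    fix \<omega> assume "\<omega> \<in> {\<omega> \<in> space M. \<not> Z \<omega> = Z' \<omega>}"
    hence w: "\<omega> \<in> space M" "0 < \<bar>Z \<omega> - Z' \<omega>\<bar>" by auto
    obtain k where "inverse (real (Suc k)) < \<bar>Z \<omega> - Z' \<omega>\<bar>"
      using reals_Archimedean[OF w(2)] by blast
    hence "1 / real (Suc k) < \<bar>Z \<omega> - Z' \<omega>\<bar>" by (simp add: inverse_eq_divide)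
    thus "\<omega> \<in> (\<Union>k. N k)" using w unfolding N_def by auto
  qed
  have nul: "(\<Union>k. N k) \<in> null_sets M" using N by (rule null_sets_UN)
  show ?thesis by (rule AE_I'[OF nul sub])
qed


lemma part_nonneg:
  assumes "is_partition t K p" shows "l \<le> K \<Longrightarrow> 0 \<le> p l"
proof (induction l)
  case 0 then show ?case using assms by (simp add: is_partition_def)
next
  case (Suc l)
  then have "0 \<le> p l" "p l < p (Suc l)" using assms by (auto simp: is_partition_def)
  then show ?case by simp
qed

lemma surface_cong:
  assumes "\<And>j. j \<in> {1..m} \<Longrightarrow> s j = s' j"
  shows "surface \<rho> m X s = surface \<rho> m X s'"
proof -
  have "(\<lambda>j. if j \<in> {1..m} then stopped (X j) (s j) else (\<lambda>_ _. 0)) =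
        (\<lambda>j. if j \<in> {1..m} then stopped (X j) (s' j) else (\<lambda>_ _. 0))"
    using assms by auto
  thus ?thesis unfolding surface_def by simp
qed

lemma SU_meas:
  assumes meas: "\<And>s. (\<forall>j. 0 \<le> s j) \<Longrightarrow> surface \<rho> m X s \<in> borel_measurable M"
    and part: "is_partition t K p"
  shows "SU \<rho> m X \<pi> K p k \<in> borel_measurable M"
proof -
  have nn: "l < K \<Longrightarrow> 0 \<le> p l \<and> 0 \<le> p (Suc l)" for l
    using part_nonneg[OF part, of l] part_nonneg[OF part, of "Suc l"] by simp
  have "\<And>l k. l \<in> {..<K} \<Longrightarrow> surface \<rho> m X (upd_vec \<pi> (p l) (p (Suc l)) k) \<in> borel_measurable M"
    using nn by (intro meas) (auto simp: upd_vec_def)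
  thus ?thesis unfolding SU_def
    by (intro borel_measurable_sum borel_measurable_diff) auto
qed

lemma OAT_meas:
  assumes meas: "\<And>s. (\<forall>j. 0 \<le> s j) \<Longrightarrow> surface \<rho> m X s \<in> borel_measurable M"
    and part: "is_partition t K p"
  shows "OAT \<rho> m X K p i \<in> borel_measurable M"
proof -
  have nn: "l < K \<Longrightarrow> 0 \<le> p l \<and> 0 \<le> p (Suc l)" for l
    using part_nonneg[OF part, of l] part_nonneg[OF part, of "Suc l"] by simp
  have "\<And>l. l \<in> {..<K} \<Longrightarrow> surface \<rho> m X (\<lambda>j. if j = i then p (Suc l) else p l) \<in> borel_measurable M"
    using nn by (intro meas) auto
  moreover have "\<And>l. l \<in> {..<K} \<Longrightarrow> surface \<rho> m X (\<lambda>j. p l) \<in> borel_measurable M"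
    using nn by (intro meas) auto
  ultimately show ?thesis unfolding OAT_def
    by (intro borel_measurable_sum borel_measurable_diff) auto
qed

lemma OAT_eq_SU:
  assumes pi: "\<pi> permutes {1..m}" and i: "i \<in> {1..m}" and pi1: "\<pi> i = 1"
  shows "OAT \<rho> m X K p i = SU \<rho> m X \<pi> K p 1"
proof -
  have inj: "inj \<pi>" using pi by (rule permutes_inj)
  have a: "surface \<rho> m X (upd_vec \<pi> (p l) (p (Suc l)) 1) = surface \<rho> m X (\<lambda>j. if j = i then p (Suc l) else p l)" for l
  proof (rule surface_cong)
    fix j assume j: "j \<in> {1..m}"
    have "\<pi> j \<in> {1..m}" using j permutes_in_image[OF pi] by blast
    moreover have "\<pi> j = 1 \<longleftrightarrow> j = i" using inj pi1 by (metis injD)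
    ultimately show "upd_vec \<pi> (p l) (p (Suc l)) 1 j = (if j = i then p (Suc l) else p l)"
      unfolding upd_vec_def by auto
  qed
  have b: "surface \<rho> m X (upd_vec \<pi> (p l) (p (Suc l)) 0) = surface \<rho> m X (\<lambda>j. p l)" for l
  proof (rule surface_cong)
    fix j assume j: "j \<in> {1..m}"
    have "\<pi> j \<in> {1..m}" using j permutes_in_image[OF pi] by blast
    thus "upd_vec \<pi> (p l) (p (Suc l)) 0 j = p l" unfolding upd_vec_def by auto
  qed
  show ?thesis unfolding OAT_def SU_def using a b by simp
qed

lemma tele_nat:
  fixes g :: "nat \<Rightarrow> real"
  shows "(\<Sum>k\<in>{1..m}. g k - g (k - 1)) = g m - g 0"
  by (induction m) (auto simp: atLeastAtMostSuc_conv)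

lemma SU_id_sum:
  "(\<Sum>k\<in>{1..m}. SU \<rho> m X id K p k \<omega>) = surface \<rho> m X (\<lambda>_. p K) \<omega> - surface \<rho> m X (\<lambda>_. p 0) \<omega>"
proof -
  have "(\<Sum>k\<in>{1..m}. SU \<rho> m X id K p k \<omega>) =
     (\<Sum>l<K. \<Sum>k\<in>{1..m}. surface \<rho> m X (upd_vec id (p l) (p (Suc l)) k) \<omega>
        - surface \<rho> m X (upd_vec id (p l) (p (Suc l)) (k - 1)) \<omega>)"
    unfolding SU_def by (rule sum.swap)
  also have "\<dots> = (\<Sum>l<K. surface \<rho> m X (upd_vec id (p l) (p (Suc l)) m) \<omega>
        - surface \<rho> m X (upd_vec id (p l) (p (Suc l)) 0) \<omega>)"
    by (subst tele_nat) simp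
  also have "\<dots> = (\<Sum>l<K. surface \<rho> m X (\<lambda>_. p (Suc l)) \<omega> - surface \<rho> m X (\<lambda>_. p l) \<omega>)"
  proof -
    have "surface \<rho> m X (upd_vec id (p l) (p (Suc l)) m) = surface \<rho> m X (\<lambda>_. p (Suc l))" for l
      by (rule surface_cong) (auto simp: upd_vec_def)
    moreover have "surface \<rho> m X (upd_vec id (p l) (p (Suc l)) 0) = surface \<rho> m X (\<lambda>_. p l)" for l
      by (rule surface_cong) (auto simp: upd_vec_def)
    ultimately show ?thesis by simp
  qed
  also have "\<dots> = surface \<rho> m X (\<lambda>_. p K) \<omega> - surface \<rho> m X (\<lambda>_. p 0) \<omega>"
    by (rule sum_lessThan_telescope)
  finally show ?thesis .
qed

theorem theorem7p3:
  fixes M :: "'a measure" and F :: "real \<Rightarrow> 'a measure"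
    and X :: "nat \<Rightarrow> real \<Rightarrow> 'a \<Rightarrow> real"
    and \<rho> :: "(nat \<Rightarrow> real \<Rightarrow> 'a \<Rightarrow> real) \<Rightarrow> 'a \<Rightarrow> real"
    and m :: nat and t :: real
    and K :: "nat \<Rightarrow> nat" and T :: "nat \<Rightarrow> nat \<Rightarrow> real"
    and D :: "nat \<Rightarrow> 'a \<Rightarrow> real"
  assumes "complete_prob_space M"
    and "rc_complete_filtration M F"
    and "adapted F m X"
    and meas: "\<And>s. (\<forall>j. 0 \<le> s j) \<Longrightarrow> surface \<rho> m X s \<in> borel_measurable M"
    and "0 \<le> t"
    and part: "\<And>n. is_partition t (K n) (T n)"
    and mesh: "(\<lambda>n. mesh (K n) (T n)) \<longlonglongrightarrow> 0"
    and indep: "\<And>\<pi> i. \<pi> permutes {1..m} \<Longrightarrow> i \<in> {1..m} \<Longrightarrow>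
                   conv_in_prob M (\<lambda>n. SU \<rho> m X \<pi> (K n) (T n) (\<pi> i)) (D i)"
  shows "(\<forall>Dpi :: (nat \<Rightarrow> nat) \<Rightarrow> nat \<Rightarrow> 'a \<Rightarrow> real.
            (\<forall>\<pi>. \<pi> permutes {1..m} \<longrightarrow> (\<forall>k\<in>{1..m}.
               conv_in_prob M (\<lambda>n. SU \<rho> m X \<pi> (K n) (T n) k) (Dpi \<pi> k))) \<longrightarrow>
            (\<forall>\<pi>. \<pi> permutes {1..m} \<longrightarrow> (\<forall>i\<in>{1..m}.
               AE \<omega> in M. Dpi \<pi> (\<pi> i) \<omega> = D i \<omega>)) \<and>
            (\<forall>i\<in>{1..m}. AE \<omega> in M.
               (1 / fact m) * (\<Sum>\<pi>\<in>{\<pi>. \<pi> permutes {1..m}}. Dpi \<pi> (\<pi> i) \<omega>) = D i \<omega>))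
       \<and> (\<forall>i\<in>{1..m}. conv_in_prob M (\<lambda>n. OAT \<rho> m X (K n) (T n) i) (D i))
       \<and> conv_in_prob M (\<lambda>n. OAT_interaction \<rho> m X t (K n) (T n)) (\<lambda>\<omega>. 0)"
proof -
  have P: "prob_space M" using assms(1) by (simp add: complete_prob_space_def)
  then interpret prob_space M .
  have mSU: "\<And>\<pi> k n. SU \<rho> m X \<pi> (K n) (T n) k \<in> borel_measurable M"
    using SU_meas[OF meas part] by blast
  have mOAT: "\<And>i n. OAT \<rho> m X (K n) (T n) i \<in> borel_measurable M"
    using OAT_meas[OF meas part] by blast
  have A: "\<forall>\<pi>. \<pi> permutes {1..m} \<longrightarrow> (\<forall>i\<in>{1..m}. AE \<omega> in M. Dpi \<pi> (\<pi> i) \<omega> = D i \<omega>)"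
    if H: "\<forall>\<pi>. \<pi> permutes {1..m} \<longrightarrow> (\<forall>k\<in>{1..m}.
               conv_in_prob M (\<lambda>n. SU \<rho> m X \<pi> (K n) (T n) k) (Dpi \<pi> k))" for Dpi
  proof (intro allI impI ballI)
    fix \<pi> i assume pi: "\<pi> permutes {1..m}" and i: "i \<in> {1..m}"
    have "\<pi> i \<in> {1..m}" using i permutes_in_image[OF pi] by blast
    then have "conv_in_prob M (\<lambda>n. SU \<rho> m X \<pi> (K n) (T n) (\<pi> i)) (Dpi \<pi> (\<pi> i))"
      using H pi by blast
    thus "AE \<omega> in M. Dpi \<pi> (\<pi> i) \<omega> = D i \<omega>"
      using cip_unique[OF P mSU _ indep[OF pi i]] by blast
  qed
  have fin: "finite {\<pi>. \<pi> permutes {1..m}}" by (rule finite_permutations) simp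
  have card: "card {\<pi>. \<pi> permutes {1..m}} = fact m" by (rule card_permutations) auto
  have part1: "(\<forall>\<pi>. \<pi> permutes {1..m} \<longrightarrow> (\<forall>i\<in>{1..m}.
               AE \<omega> in M. Dpi \<pi> (\<pi> i) \<omega> = D i \<omega>)) \<and>
            (\<forall>i\<in>{1..m}. AE \<omega> in M.
               (1 / fact m) * (\<Sum>\<pi>\<in>{\<pi>. \<pi> permutes {1..m}}. Dpi \<pi> (\<pi> i) \<omega>) = D i \<omega>)"
    if H: "\<forall>\<pi>. \<pi> permutes {1..m} \<longrightarrow> (\<forall>k\<in>{1..m}.
               conv_in_prob M (\<lambda>n. SU \<rho> m X \<pi> (K n) (T n) k) (Dpi \<pi> k))" for Dpi
  proof (intro conjI ballI)
    show "\<forall>\<pi>. \<pi> permutes {1..m} \<longrightarrow> (\<forall>i\<in>{1..m}. AE \<omega> in M. Dpi \<pi> (\<pi> i) \<omega> = D i \<omega>)"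
      using A[OF H] .
    fix i assume i: "i \<in> {1..m}"
    have "AE \<omega> in M. \<forall>\<pi>\<in>{\<pi>. \<pi> permutes {1..m}}. Dpi \<pi> (\<pi> i) \<omega> = D i \<omega>"
      using A[OF H] i by (intro AE_finite_allI[OF fin]) auto
    thus "AE \<omega> in M. (1 / fact m) * (\<Sum>\<pi>\<in>{\<pi>. \<pi> permutes {1..m}}. Dpi \<pi> (\<pi> i) \<omega>) = D i \<omega>"
    proof (rule AE_mp, intro AE_I2 impI)
      fix \<omega> assume "\<forall>\<pi>\<in>{\<pi>. \<pi> permutes {1..m}}. Dpi \<pi> (\<pi> i) \<omega> = D i \<omega>"
      then have "(\<Sum>\<pi>\<in>{\<pi>. \<pi> permutes {1..m}}. Dpi \<pi> (\<pi> i) \<omega>) = (\<Sum>\<pi>\<in>{\<pi>. \<pi> permutes {1..m}}. D i \<omega>)"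
        by (intro sum.cong) auto
      also have "\<dots> = fact m * D i \<omega>" using card by simp
      finally show "(1 / fact m) * (\<Sum>\<pi>\<in>{\<pi>. \<pi> permutes {1..m}}. Dpi \<pi> (\<pi> i) \<omega>) = D i \<omega>"
        by simp
    qed
  qed
  have OATc: "conv_in_prob M (\<lambda>n. OAT \<rho> m X (K n) (T n) i) (D i)" if i: "i \<in> {1..m}" for i
  proof -
    have one: "1 \<in> {1..m}" using i by auto
    define \<pi> where "\<pi> = Transposition.transpose i (1::nat)"
    have pi: "\<pi> permutes {1..m}" unfolding \<pi>_def by (rule permutes_swap_id[OF i one])
    have pi1: "\<pi> i = 1" unfolding \<pi>_def by simp
    have "(\<lambda>n. OAT \<rho> m X (K n) (T n) i) = (\<lambda>n. SU \<rho> m X \<pi> (K n) (T n) (\<pi> i))"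
    proof (rule ext)
      fix n
      show "OAT \<rho> m X (K n) (T n) i = SU \<rho> m X \<pi> (K n) (T n) (\<pi> i)"
        unfolding pi1 by (rule OAT_eq_SU[OF pi i pi1])
    qed
    thus ?thesis using indep[OF pi i] by simp
  qed
  have sumSU: "conv_in_prob M (\<lambda>n \<omega>. \<Sum>k\<in>{1..m}. SU \<rho> m X id (K n) (T n) k \<omega>) (\<lambda>\<omega>. \<Sum>k\<in>{1..m}. D k \<omega>)"
  proof (rule cip_sum[OF P])
    fix k assume k: "k \<in> {1..m}"
    show "conv_in_prob M (\<lambda>n. SU \<rho> m X id (K n) (T n) k) (D k)"
      using indep[OF permutes_id k] by simp
  qed (auto intro: mSU)
  have sumOAT: "conv_in_prob M (\<lambda>n \<omega>. \<Sum>k\<in>{1..m}. OAT \<rho> m X (K n) (T n) k \<omega>) (\<lambda>\<omega>. \<Sum>k\<in>{1..m}. D k \<omega>)"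
    by (rule cip_sum[OF P]) (auto intro: mOAT OATc)
  have diff: "conv_in_prob M (\<lambda>n \<omega>. (\<Sum>k\<in>{1..m}. SU \<rho> m X id (K n) (T n) k \<omega>) - (\<Sum>k\<in>{1..m}. OAT \<rho> m X (K n) (T n) k \<omega>))
      (\<lambda>\<omega>. (\<Sum>k\<in>{1..m}. D k \<omega>) - (\<Sum>k\<in>{1..m}. D k \<omega>))"
    by (rule cip_diff[OF P _ _ sumSU sumOAT]) (auto intro!: borel_measurable_sum mSU mOAT)
  have eq: "(\<lambda>n \<omega>. (\<Sum>k\<in>{1..m}. SU \<rho> m X id (K n) (T n) k \<omega>) - (\<Sum>k\<in>{1..m}. OAT \<rho> m X (K n) (T n) k \<omega>))
      = (\<lambda>n. OAT_interaction \<rho> m X t (K n) (T n))"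
  proof (intro ext)
    fix n \<omega>
    have "T n (K n) = t" "T n 0 = 0" using part[of n] by (auto simp: is_partition_def)
    then show "(\<Sum>k\<in>{1..m}. SU \<rho> m X id (K n) (T n) k \<omega>) - (\<Sum>k\<in>{1..m}. OAT \<rho> m X (K n) (T n) k \<omega>)
        = OAT_interaction \<rho> m X t (K n) (T n) \<omega>"
      unfolding OAT_interaction_def SU_id_sum R_proc_def by simp
  qed
  have inter: "conv_in_prob M (\<lambda>n. OAT_interaction \<rho> m X t (K n) (T n)) (\<lambda>\<omega>. 0)"
    using diff unfolding eq by simp
  show ?thesis using part1 OATc inter by blast
qed

end
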